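(* A $5 \times 5$ real matrix is panstochastic if and only if it is a convex combination of panstochastic permutation matrices.
   Context: An $n \times n$ matrix with nonnegative real entries is doubly stochastic if the sum of the entries along any of its rows or columns is equal to $1$. A doubly stochastic matrix is panstochastic if the sum of the entries along any downward diagonal or upward diagonal, either broken or unbroken, is equal to $1$ (indexing rows and columns by $\{0,1,\dots,n-1\}$, the $k$th upward diagonal consists of the entries $(i,j)$ with $i+j \equiv k \pmod n$, and the $k$th downward diagonal of the entries $(i,j)$ with $i-j \equiv k \pmod n$). A linear combination is called convex if the coefficients are nonnegative and their sum is equal to $1$. *)

theory Defs
  imports "HOL-Analysis.Analysis" "HOL-Combinatorics.Permutations"
begin

text \<open>An n x n real matrix is modelled as a function A :: nat => nat => real,
  rows and columns indexed by {0..<n}; entries outside are irrelevant.\<close>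

definition doubly_stochastic :: "nat \<Rightarrow> (nat \<Rightarrow> nat \<Rightarrow> real) \<Rightarrow> bool" where
  "doubly_stochastic n A \<longleftrightarrow>
     (\<forall>i<n. \<forall>j<n. A i j \<ge> 0) \<and>
     (\<forall>i<n. (\<Sum>j<n. A i j) = 1) \<and>
     (\<forall>j<n. (\<Sum>i<n. A i j) = 1)"

definition panstochastic :: "nat \<Rightarrow> (nat \<Rightarrow> nat \<Rightarrow> real) \<Rightarrow> bool" where
  "panstochastic n A \<longleftrightarrow> doubly_stochastic n A \<and>
     (\<forall>k<n. (\<Sum>(i,j)\<in>{(i,j). i < n \<and> j < n \<and> (i + j) mod n = k}. A i j) = 1) \<and>
     (\<forall>k<n. (\<Sum>(i,j)\<in>{(i,j). i < n \<and> j < n \<and> (int i - int j) mod int n = int k}. A i j) = 1)"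

definition perm_matrix :: "(nat \<Rightarrow> nat) \<Rightarrow> nat \<Rightarrow> nat \<Rightarrow> real" where
  "perm_matrix \<sigma> i j = (if j = \<sigma> i then 1 else 0)"

definition is_perm_matrix :: "nat \<Rightarrow> (nat \<Rightarrow> nat \<Rightarrow> real) \<Rightarrow> bool" where
  "is_perm_matrix n P \<longleftrightarrow> (\<exists>\<sigma>. \<sigma> permutes {0..<n} \<and> (\<forall>i<n. \<forall>j<n. P i j = perm_matrix \<sigma> i j))"

definition convex_comb_of :: "nat \<Rightarrow> ((nat \<Rightarrow> nat \<Rightarrow> real) \<Rightarrow> bool) \<Rightarrow> (nat \<Rightarrow> nat \<Rightarrow> real) \<Rightarrow> bool" where
  "convex_comb_of n Q A \<longleftrightarrow>
     (\<exists>m::nat. \<exists>c :: nat \<Rightarrow> real. \<exists>M :: nat \<Rightarrow> nat \<Rightarrow> nat \<Rightarrow> real.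
        (\<forall>l<m. c l \<ge> 0 \<and> Q (M l)) \<and> (\<Sum>l<m. c l) = 1 \<and>
        (\<forall>i<n. \<forall>j<n. A i j = (\<Sum>l<m. c l * M l i j)))"

end

theory Submission
  imports Defs
begin

lemma sum_set: "(\<Sum>(i,j)\<in>{(i,j). i < (n::nat) \<and> j < n \<and> P i j}. f i j) = (\<Sum>i<n. \<Sum>j<n. if P i j then f i j else (0::real))"
proof -
  have e: "{(i,j). i < n \<and> j < n \<and> P i j} = {p \<in> {..<n}\<times>{..<n}. P (fst p) (snd p)}" by auto
  have "(\<Sum>p\<in>{p \<in> {..<n}\<times>{..<n}. P (fst p) (snd p)}. f (fst p) (snd p)) = (\<Sum>p\<in>{..<n}\<times>{..<n}. if P (fst p) (snd p) then f (fst p) (snd p) else 0)"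
    by (rule sum.inter_filter) auto
  then show ?thesis unfolding e by (simp add: sum.cartesian_product case_prod_beta)
qed

lemma ten: "{..<10::nat} = {9,8,7,6,5,4,3,2,1,0}" by (simp add: lessThan_Suc eval_nat_numeral)
lemma all10: "(\<forall>l<10::nat. P l) \<longleftrightarrow> P 0 \<and> P 1 \<and> P 2 \<and> P 3 \<and> P 4 \<and> P 5 \<and> P 6 \<and> P 7 \<and> P 8 \<and> P 9"
proof -
  have "(\<forall>l<10. P l) \<longleftrightarrow> (\<forall>l\<in>{9,8,7,6,5,4,3,2,1,0::nat}. P l)" unfolding ten[symmetric] by auto
  then show ?thesis by blast
qed
lemma five: "{..<5::nat} = {4,3,2,1,0}" by (simp add: lessThan_Suc eval_nat_numeral)
lemma all5: "(\<forall>l<5::nat. P l) \<longleftrightarrow> P 0 \<and> P 1 \<and> P 2 \<and> P 3 \<and> P 4"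
proof -
  have "(\<forall>l<5. P l) \<longleftrightarrow> (\<forall>l\<in>{4,3,2,1,0::nat}. P l)" unfolding five[symmetric] by auto
  then show ?thesis by blast
qed

lemma pan_eqs:
  assumes "panstochastic 5 A"
  shows
    R0: "A 0 0 + A 0 1 + A 0 2 + A 0 3 + A 0 4 = 1"
    and R1: "A 1 0 + A 1 1 + A 1 2 + A 1 3 + A 1 4 = 1"
    and R2: "A 2 0 + A 2 1 + A 2 2 + A 2 3 + A 2 4 = 1"
    and R3: "A 3 0 + A 3 1 + A 3 2 + A 3 3 + A 3 4 = 1"
    and R4: "A 4 0 + A 4 1 + A 4 2 + A 4 3 + A 4 4 = 1"
    and C0: "A 0 0 + A 1 0 + A 2 0 + A 3 0 + A 4 0 = 1"
    and C1: "A 0 1 + A 1 1 + A 2 1 + A 3 1 + A 4 1 = 1"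
    and C2: "A 0 2 + A 1 2 + A 2 2 + A 3 2 + A 4 2 = 1"
    and C3: "A 0 3 + A 1 3 + A 2 3 + A 3 3 + A 4 3 = 1"
    and C4: "A 0 4 + A 1 4 + A 2 4 + A 3 4 + A 4 4 = 1"
    and U0: "A 0 0 + A 1 4 + A 2 3 + A 3 2 + A 4 1 = 1"
    and U1: "A 0 1 + A 1 0 + A 2 4 + A 3 3 + A 4 2 = 1"
    and U2: "A 0 2 + A 1 1 + A 2 0 + A 3 4 + A 4 3 = 1"
    and U3: "A 0 3 + A 1 2 + A 2 1 + A 3 0 + A 4 4 = 1"
    and U4: "A 0 4 + A 1 3 + A 2 2 + A 3 1 + A 4 0 = 1"
    and D0: "A 0 0 + A 1 1 + A 2 2 + A 3 3 + A 4 4 = 1"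
    and D1: "A 0 4 + A 1 0 + A 2 1 + A 3 2 + A 4 3 = 1"
    and D2: "A 0 3 + A 1 4 + A 2 0 + A 3 1 + A 4 2 = 1"
    and D3: "A 0 2 + A 1 3 + A 2 4 + A 3 0 + A 4 1 = 1"
    and D4: "A 0 1 + A 1 2 + A 2 3 + A 3 4 + A 4 0 = 1"
proof -
  have ds: "doubly_stochastic 5 A" and u: "\<forall>k<5. (\<Sum>(i,j)\<in>{(i,j). i < 5 \<and> j < 5 \<and> (i + j) mod 5 = k}. A i j) = 1"
    and d: "\<forall>k<5. (\<Sum>(i,j)\<in>{(i,j). i < 5 \<and> j < 5 \<and> (int i - int j) mod int 5 = int k}. A i j) = 1"
    using assms unfolding panstochastic_def by auto
  have r: "\<forall>i<5. (\<Sum>j<5. A i j) = 1" and c: "\<forall>j<5. (\<Sum>i<5. A i j) = 1"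
    using ds unfolding doubly_stochastic_def by auto
  show "A 0 0 + A 0 1 + A 0 2 + A 0 3 + A 0 4 = 1" using r[rule_format, of 0] by (simp add: five ac_simps)
  show "A 1 0 + A 1 1 + A 1 2 + A 1 3 + A 1 4 = 1" using r[rule_format, of 1] by (simp add: five ac_simps)
  show "A 2 0 + A 2 1 + A 2 2 + A 2 3 + A 2 4 = 1" using r[rule_format, of 2] by (simp add: five ac_simps)
  show "A 3 0 + A 3 1 + A 3 2 + A 3 3 + A 3 4 = 1" using r[rule_format, of 3] by (simp add: five ac_simps)
  show "A 4 0 + A 4 1 + A 4 2 + A 4 3 + A 4 4 = 1" using r[rule_format, of 4] by (simp add: five ac_simps)
  show "A 0 0 + A 1 0 + A 2 0 + A 3 0 + A 4 0 = 1" using c[rule_format, of 0] by (simp add: five ac_simps)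
  show "A 0 1 + A 1 1 + A 2 1 + A 3 1 + A 4 1 = 1" using c[rule_format, of 1] by (simp add: five ac_simps)
  show "A 0 2 + A 1 2 + A 2 2 + A 3 2 + A 4 2 = 1" using c[rule_format, of 2] by (simp add: five ac_simps)
  show "A 0 3 + A 1 3 + A 2 3 + A 3 3 + A 4 3 = 1" using c[rule_format, of 3] by (simp add: five ac_simps)
  show "A 0 4 + A 1 4 + A 2 4 + A 3 4 + A 4 4 = 1" using c[rule_format, of 4] by (simp add: five ac_simps)
  show "A 0 0 + A 1 4 + A 2 3 + A 3 2 + A 4 1 = 1" using u[rule_format, of 0] by (simp add: sum_set five ac_simps)
  show "A 0 1 + A 1 0 + A 2 4 + A 3 3 + A 4 2 = 1" using u[rule_format, of 1] by (simp add: sum_set five ac_simps)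
  show "A 0 2 + A 1 1 + A 2 0 + A 3 4 + A 4 3 = 1" using u[rule_format, of 2] by (simp add: sum_set five ac_simps)
  show "A 0 3 + A 1 2 + A 2 1 + A 3 0 + A 4 4 = 1" using u[rule_format, of 3] by (simp add: sum_set five ac_simps)
  show "A 0 4 + A 1 3 + A 2 2 + A 3 1 + A 4 0 = 1" using u[rule_format, of 4] by (simp add: sum_set five ac_simps)
  show "A 0 0 + A 1 1 + A 2 2 + A 3 3 + A 4 4 = 1" using d[rule_format, of 0] by (simp add: sum_set five ac_simps)
  show "A 0 4 + A 1 0 + A 2 1 + A 3 2 + A 4 3 = 1" using d[rule_format, of 1] by (simp add: sum_set five ac_simps)
  show "A 0 3 + A 1 4 + A 2 0 + A 3 1 + A 4 2 = 1" using d[rule_format, of 2] by (simp add: sum_set five ac_simps)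
  show "A 0 2 + A 1 3 + A 2 4 + A 3 0 + A 4 1 = 1" using d[rule_format, of 3] by (simp add: sum_set five ac_simps)
  show "A 0 1 + A 1 2 + A 2 3 + A 3 4 + A 4 0 = 1" using d[rule_format, of 4] by (simp add: sum_set five ac_simps)
qed

lemma pan_nonneg: "panstochastic 5 A \<Longrightarrow> i < 5 \<Longrightarrow> j < 5 \<Longrightarrow> A i j \<ge> 0"
  unfolding panstochastic_def doubly_stochastic_def by auto

lemma comb_one:
  assumes "finite S" "\<forall>p\<in>S. a p = (\<Sum>l<m. c l * b l p)" "\<forall>l<m. sum (b l) S = 1" "(\<Sum>l<m. c l) = (1::real)"
  shows "sum a S = 1"
proof -
  have "sum a S = (\<Sum>p\<in>S. \<Sum>l<m. c l * b l p)" using assms(2) by (intro sum.cong) auto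
  also have "\<dots> = (\<Sum>l<m. c l * sum (b l) S)" by (subst sum.swap) (simp add: sum_distrib_left)
  also have "\<dots> = (\<Sum>l<m. c l)" using assms(3) by simp
  finally show ?thesis using assms(4) by simp
qed

lemma easy_dir:
  assumes "convex_comb_of 5 (\<lambda>P. is_perm_matrix 5 P \<and> panstochastic 5 P) A"
  shows "panstochastic 5 A"
proof -
  obtain m :: nat and c M where H: "(\<forall>l<m. c l \<ge> 0 \<and> (is_perm_matrix 5 (M l) \<and> panstochastic 5 (M l))) \<and> (\<Sum>l<m. c l) = 1 \<and> (\<forall>i<5. \<forall>j<5. A i j = (\<Sum>l<m. c l * M l i j))"
    using assms unfolding convex_comb_of_def by blast
  have cM: "\<forall>l<m. c l \<ge> 0 \<and> (is_perm_matrix 5 (M l) \<and> panstochastic 5 (M l))" using H by (rule conjunct1)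
  have s1: "(\<Sum>l<m. c l) = 1" using H by (elim conjE)
  have AM: "\<forall>i<5. \<forall>j<5. A i j = (\<Sum>l<m. c l * M l i j)" using H by (elim conjE)
  have cnn: "\<And>l. l < m \<Longrightarrow> c l \<ge> 0" using cM by blast
  have pM: "\<And>l. l < m \<Longrightarrow> panstochastic 5 (M l)" using cM by blast
  have Mnn: "\<And>l i j. l < m \<Longrightarrow> i < 5 \<Longrightarrow> j < 5 \<Longrightarrow> M l i j \<ge> 0"
    using pM unfolding panstochastic_def doubly_stochastic_def by blast
  have Mrow: "\<And>l i. l < m \<Longrightarrow> i < 5 \<Longrightarrow> (\<Sum>j<5. M l i j) = 1"
    using pM unfolding panstochastic_def doubly_stochastic_def by blast
  have Mcol: "\<And>l j. l < m \<Longrightarrow> j < 5 \<Longrightarrow> (\<Sum>i<5. M l i j) = 1"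
    using pM unfolding panstochastic_def doubly_stochastic_def by blast
  have Mup: "\<And>l k. l < m \<Longrightarrow> k < 5 \<Longrightarrow> (\<Sum>(i,j)\<in>{(i,j). i < 5 \<and> j < 5 \<and> (i + j) mod 5 = k}. M l i j) = 1"
    using pM unfolding panstochastic_def by blast
  have Mdown: "\<And>l k. l < m \<Longrightarrow> k < 5 \<Longrightarrow> (\<Sum>(i,j)\<in>{(i,j). i < 5 \<and> j < 5 \<and> (int i - int j) mod int 5 = int k}. M l i j) = 1"
    using pM unfolding panstochastic_def by blast
  have nn: "\<forall>i<5. \<forall>j<5. A i j \<ge> 0"
  proof (intro allI impI)
    fix i j :: nat assume ij: "i < 5" "j < 5"
    have "(\<Sum>l<m. c l * M l i j) \<ge> 0" using cnn Mnn ij by (intro sum_nonneg mult_nonneg_nonneg) auto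
    then show "A i j \<ge> 0" using AM ij by simp
  qed
  have rows: "\<forall>i<5. (\<Sum>j<5. A i j) = 1"
  proof (intro allI impI)
    fix i :: nat assume i: "i < 5"
    show "(\<Sum>j<5. A i j) = 1"
    proof (rule comb_one[where b="\<lambda>l j. M l i j" and c=c and m=m])
      show "\<forall>p\<in>{..<5}. A i p = (\<Sum>l<m. c l * M l i p)" using AM i by simp
      show "\<forall>l<m. (\<Sum>j<5. M l i j) = 1" using Mrow i by simp
    qed (simp_all add: s1)
  qed
  have cols: "\<forall>j<5. (\<Sum>i<5. A i j) = 1"
  proof (intro allI impI)
    fix j :: nat assume j: "j < 5"
    show "(\<Sum>i<5. A i j) = 1"
    proof (rule comb_one[where b="\<lambda>l i. M l i j" and c=c and m=m])
      show "\<forall>p\<in>{..<5}. A p j = (\<Sum>l<m. c l * M l p j)" using AM j by simp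
      show "\<forall>l<m. (\<Sum>i<5. M l i j) = 1" using Mcol j by simp
    qed (simp_all add: s1)
  qed
  have ups: "\<forall>k<5. (\<Sum>(i,j)\<in>{(i,j). i < 5 \<and> j < 5 \<and> (i + j) mod 5 = k}. A i j) = 1"
  proof (intro allI impI)
    fix k :: nat assume k: "k < 5"
    show "(\<Sum>(i,j)\<in>{(i,j). i < 5 \<and> j < 5 \<and> (i + j) mod 5 = k}. A i j) = 1"
    proof (rule comb_one[where b="\<lambda>l (i,j). M l i j" and c=c and m=m])
      show "finite {(i,j). i < (5::nat) \<and> j < (5::nat) \<and> (i + j) mod 5 = k}"
        by (rule finite_subset[of _ "{..<5}\<times>{..<5}"]) auto
      show "\<forall>p\<in>{(i,j). i < 5 \<and> j < 5 \<and> (i + j) mod 5 = k}. (case p of (i,j) \<Rightarrow> A i j) = (\<Sum>l<m. c l * (case p of (i,j) \<Rightarrow> M l i j))"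
        using AM by auto
      show "\<forall>l<m. (\<Sum>(i,j)\<in>{(i,j). i < 5 \<and> j < 5 \<and> (i + j) mod 5 = k}. M l i j) = 1" using Mup k by simp
    qed (simp add: s1)
  qed
  have downs: "\<forall>k<5. (\<Sum>(i,j)\<in>{(i,j). i < 5 \<and> j < 5 \<and> (int i - int j) mod int 5 = int k}. A i j) = 1"
  proof (intro allI impI)
    fix k :: nat assume k: "k < 5"
    show "(\<Sum>(i,j)\<in>{(i,j). i < 5 \<and> j < 5 \<and> (int i - int j) mod int 5 = int k}. A i j) = 1"
    proof (rule comb_one[where b="\<lambda>l (i,j). M l i j" and c=c and m=m])
      show "finite {(i,j). i < (5::nat) \<and> j < (5::nat) \<and> (int i - int j) mod int 5 = int k}"
        by (rule finite_subset[of _ "{..<5}\<times>{..<5}"]) auto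
      show "\<forall>p\<in>{(i,j). i < 5 \<and> j < 5 \<and> (int i - int j) mod int 5 = int k}. (case p of (i,j) \<Rightarrow> A i j) = (\<Sum>l<m. c l * (case p of (i,j) \<Rightarrow> M l i j))"
        using AM by auto
      show "\<forall>l<m. (\<Sum>(i,j)\<in>{(i,j). i < 5 \<and> j < 5 \<and> (int i - int j) mod int 5 = int k}. M l i j) = 1" using Mdown k by simp
    qed (simp add: s1)
  qed
  show ?thesis unfolding panstochastic_def doubly_stochastic_def
    by (intro conjI nn rows cols ups downs)
qed

definition sig :: "nat \<Rightarrow> nat \<Rightarrow> nat" where
  "sig l i = (if i < 5 then (if l < 5 then (2*i+l) mod 5 else (3*i+(l-5)) mod 5) else i)"

definition PM :: "nat \<Rightarrow> nat \<Rightarrow> nat \<Rightarrow> real" where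
  "PM l = perm_matrix (sig l)"

lemma sig_perm_of_surj:
  assumes "{0..<5} \<subseteq> sig l ` {0..<5}"
  shows "sig l permutes {0..<5}"
proof (rule bij_imp_permutes)
  have sub: "sig l ` {0..<5} \<subseteq> {0..<5}" by (auto simp: sig_def)
  have inj: "inj_on (sig l) {0..<5}" using assms by (intro finite_surj_inj) auto
  show "bij_betw (sig l) {0..<5} {0..<5}" unfolding bij_betw_def using inj sub assms by blast
  show "\<And>x. x \<notin> {0..<5} \<Longrightarrow> sig l x = x" by (simp add: sig_def)
qed
lemma sig_surj0: "{0..<5} \<subseteq> sig 0 ` {0..<5}"
  unfolding atLeast0LessThan five by (simp add: sig_def)
lemma sig_surj1: "{0..<5} \<subseteq> sig 1 ` {0..<5}"
  unfolding atLeast0LessThan five by (simp add: sig_def)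
lemma sig_surj2: "{0..<5} \<subseteq> sig 2 ` {0..<5}"
  unfolding atLeast0LessThan five by (simp add: sig_def)
lemma sig_surj3: "{0..<5} \<subseteq> sig 3 ` {0..<5}"
  unfolding atLeast0LessThan five by (simp add: sig_def)
lemma sig_surj4: "{0..<5} \<subseteq> sig 4 ` {0..<5}"
  unfolding atLeast0LessThan five by (simp add: sig_def)
lemma sig_surj5: "{0..<5} \<subseteq> sig 5 ` {0..<5}"
  unfolding atLeast0LessThan five by (simp add: sig_def)
lemma sig_surj6: "{0..<5} \<subseteq> sig 6 ` {0..<5}"
  unfolding atLeast0LessThan five by (simp add: sig_def)
lemma sig_surj7: "{0..<5} \<subseteq> sig 7 ` {0..<5}"
  unfolding atLeast0LessThan five by (simp add: sig_def)
lemma sig_surj8: "{0..<5} \<subseteq> sig 8 ` {0..<5}"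
  unfolding atLeast0LessThan five by (simp add: sig_def)
lemma sig_surj9: "{0..<5} \<subseteq> sig 9 ` {0..<5}"
  unfolding atLeast0LessThan five by (simp add: sig_def)
lemma PM_perm: "\<forall>l<10. is_perm_matrix 5 (PM l)"
proof -
  have "\<forall>l<10. sig l permutes {0..<5}"
    unfolding all10 using sig_surj0 sig_surj1 sig_surj2 sig_surj3 sig_surj4 sig_surj5 sig_surj6 sig_surj7 sig_surj8 sig_surj9 by (intro conjI sig_perm_of_surj)
  then show ?thesis unfolding is_perm_matrix_def PM_def by blast
qed

lemma PM_pan0: "panstochastic 5 (PM 0)"
  unfolding panstochastic_def doubly_stochastic_def all5 sum_set five
  by (simp add: PM_def perm_matrix_def sig_def)

lemma PM_pan1: "panstochastic 5 (PM 1)"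
  unfolding panstochastic_def doubly_stochastic_def all5 sum_set five
  by (simp add: PM_def perm_matrix_def sig_def)

lemma PM_pan2: "panstochastic 5 (PM 2)"
  unfolding panstochastic_def doubly_stochastic_def all5 sum_set five
  by (simp add: PM_def perm_matrix_def sig_def)

lemma PM_pan3: "panstochastic 5 (PM 3)"
  unfolding panstochastic_def doubly_stochastic_def all5 sum_set five
  by (simp add: PM_def perm_matrix_def sig_def)

lemma PM_pan4: "panstochastic 5 (PM 4)"
  unfolding panstochastic_def doubly_stochastic_def all5 sum_set five
  by (simp add: PM_def perm_matrix_def sig_def)

lemma PM_pan5: "panstochastic 5 (PM 5)"
  unfolding panstochastic_def doubly_stochastic_def all5 sum_set five
  by (simp add: PM_def perm_matrix_def sig_def)

lemma PM_pan6: "panstochastic 5 (PM 6)"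
  unfolding panstochastic_def doubly_stochastic_def all5 sum_set five
  by (simp add: PM_def perm_matrix_def sig_def)

lemma PM_pan7: "panstochastic 5 (PM 7)"
  unfolding panstochastic_def doubly_stochastic_def all5 sum_set five
  by (simp add: PM_def perm_matrix_def sig_def)

lemma PM_pan8: "panstochastic 5 (PM 8)"
  unfolding panstochastic_def doubly_stochastic_def all5 sum_set five
  by (simp add: PM_def perm_matrix_def sig_def)

lemma PM_pan9: "panstochastic 5 (PM 9)"
  unfolding panstochastic_def doubly_stochastic_def all5 sum_set five
  by (simp add: PM_def perm_matrix_def sig_def)

lemma PM_pan: "\<forall>l<10. panstochastic 5 (PM l)"
  unfolding all10 using PM_pan0 PM_pan1 PM_pan2 PM_pan3 PM_pan4 PM_pan5 PM_pan6 PM_pan7 PM_pan8 PM_pan9 by blast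

lemma hard_dir:
  assumes pan: "panstochastic 5 A"
  shows "convex_comb_of 5 (\<lambda>P. is_perm_matrix 5 P \<and> panstochastic 5 P) A"
proof -
  note E = pan_eqs[OF pan]
  note nn = pan_nonneg[OF pan]
  define x where "x k = (\<Sum>i<5. A i ((2*i+k) mod 5)) / 5" for k
  define y where "y k = (\<Sum>i<5. A i ((3*i+k) mod 5)) / 5 - 1/5" for k
  have x0: "5 * x 0 = A 0 0 + A 1 2 + A 2 4 + A 3 1 + A 4 3" unfolding x_def five by (simp add: ac_simps numeral_2_eq_2[symmetric])
  have y0: "5 * y 0 = A 0 0 + A 1 3 + A 2 1 + A 3 4 + A 4 2 - 1" unfolding y_def five by (simp add: algebra_simps numeral_2_eq_2[symmetric])
  have x1: "5 * x 1 = A 0 1 + A 1 3 + A 2 0 + A 3 2 + A 4 4" unfolding x_def five by (simp add: ac_simps numeral_2_eq_2[symmetric])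
  have y1: "5 * y 1 = A 0 1 + A 1 4 + A 2 2 + A 3 0 + A 4 3 - 1" unfolding y_def five by (simp add: algebra_simps numeral_2_eq_2[symmetric])
  have x2: "5 * x 2 = A 0 2 + A 1 4 + A 2 1 + A 3 3 + A 4 0" unfolding x_def five by (simp add: ac_simps numeral_2_eq_2[symmetric])
  have y2: "5 * y 2 = A 0 2 + A 1 0 + A 2 3 + A 3 1 + A 4 4 - 1" unfolding y_def five by (simp add: algebra_simps numeral_2_eq_2[symmetric])
  have x3: "5 * x 3 = A 0 3 + A 1 0 + A 2 2 + A 3 4 + A 4 1" unfolding x_def five by (simp add: ac_simps numeral_2_eq_2[symmetric])
  have y3: "5 * y 3 = A 0 3 + A 1 1 + A 2 4 + A 3 2 + A 4 0 - 1" unfolding y_def five by (simp add: algebra_simps numeral_2_eq_2[symmetric])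
  have x4: "5 * x 4 = A 0 4 + A 1 1 + A 2 3 + A 3 0 + A 4 2" unfolding x_def five by (simp add: ac_simps numeral_2_eq_2[symmetric])
  have y4: "5 * y 4 = A 0 4 + A 1 2 + A 2 0 + A 3 3 + A 4 1 - 1" unfolding y_def five by (simp add: algebra_simps numeral_2_eq_2[symmetric])
  have cell_0_0: "A 0 0 = x 0 + y 0" using x0 y0 E(1-5) E(6) E(11) E(16) by linarith
  have cell_0_1: "A 0 1 = x 1 + y 1" using x1 y1 E(1-5) E(7) E(12) E(20) by linarith
  have cell_0_2: "A 0 2 = x 2 + y 2" using x2 y2 E(1-5) E(8) E(13) E(19) by linarith
  have cell_0_3: "A 0 3 = x 3 + y 3" using x3 y3 E(1-5) E(9) E(14) E(18) by linarith
  have cell_0_4: "A 0 4 = x 4 + y 4" using x4 y4 E(1-5) E(10) E(15) E(17) by linarith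
  have cell_1_0: "A 1 0 = x 3 + y 2" using x3 y2 E(1-5) E(6) E(12) E(17) by linarith
  have cell_1_1: "A 1 1 = x 4 + y 3" using x4 y3 E(1-5) E(7) E(13) E(16) by linarith
  have cell_1_2: "A 1 2 = x 0 + y 4" using x0 y4 E(1-5) E(8) E(14) E(20) by linarith
  have cell_1_3: "A 1 3 = x 1 + y 0" using x1 y0 E(1-5) E(9) E(15) E(19) by linarith
  have cell_1_4: "A 1 4 = x 2 + y 1" using x2 y1 E(1-5) E(10) E(11) E(18) by linarith
  have cell_2_0: "A 2 0 = x 1 + y 4" using x1 y4 E(1-5) E(6) E(13) E(18) by linarith
  have cell_2_1: "A 2 1 = x 2 + y 0" using x2 y0 E(1-5) E(7) E(14) E(17) by linarith
  have cell_2_2: "A 2 2 = x 3 + y 1" using x3 y1 E(1-5) E(8) E(15) E(16) by linarith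
  have cell_2_3: "A 2 3 = x 4 + y 2" using x4 y2 E(1-5) E(9) E(11) E(20) by linarith
  have cell_2_4: "A 2 4 = x 0 + y 3" using x0 y3 E(1-5) E(10) E(12) E(19) by linarith
  have cell_3_0: "A 3 0 = x 4 + y 1" using x4 y1 E(1-5) E(6) E(14) E(19) by linarith
  have cell_3_1: "A 3 1 = x 0 + y 2" using x0 y2 E(1-5) E(7) E(15) E(18) by linarith
  have cell_3_2: "A 3 2 = x 1 + y 3" using x1 y3 E(1-5) E(8) E(11) E(17) by linarith
  have cell_3_3: "A 3 3 = x 2 + y 4" using x2 y4 E(1-5) E(9) E(12) E(16) by linarith
  have cell_3_4: "A 3 4 = x 3 + y 0" using x3 y0 E(1-5) E(10) E(13) E(20) by linarith
  have cell_4_0: "A 4 0 = x 2 + y 3" using x2 y3 E(1-5) E(6) E(15) E(20) by linarith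
  have cell_4_1: "A 4 1 = x 3 + y 4" using x3 y4 E(1-5) E(7) E(11) E(19) by linarith
  have cell_4_2: "A 4 2 = x 4 + y 0" using x4 y0 E(1-5) E(8) E(12) E(18) by linarith
  have cell_4_3: "A 4 3 = x 0 + y 1" using x0 y1 E(1-5) E(9) E(13) E(17) by linarith
  have cell_4_4: "A 4 4 = x 1 + y 2" using x1 y2 E(1-5) E(10) E(14) E(16) by linarith
  have pair_0_0: "x 0 + y 0 \<ge> 0" using cell_0_0 nn[of 0 0] by simp
  have pair_0_1: "x 1 + y 0 \<ge> 0" using cell_1_3 nn[of 1 3] by simp
  have pair_0_2: "x 2 + y 0 \<ge> 0" using cell_2_1 nn[of 2 1] by simp
  have pair_0_3: "x 3 + y 0 \<ge> 0" using cell_3_4 nn[of 3 4] by simp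
  have pair_0_4: "x 4 + y 0 \<ge> 0" using cell_4_2 nn[of 4 2] by simp
  have pair_1_0: "x 0 + y 1 \<ge> 0" using cell_4_3 nn[of 4 3] by simp
  have pair_1_1: "x 1 + y 1 \<ge> 0" using cell_0_1 nn[of 0 1] by simp
  have pair_1_2: "x 2 + y 1 \<ge> 0" using cell_1_4 nn[of 1 4] by simp
  have pair_1_3: "x 3 + y 1 \<ge> 0" using cell_2_2 nn[of 2 2] by simp
  have pair_1_4: "x 4 + y 1 \<ge> 0" using cell_3_0 nn[of 3 0] by simp
  have pair_2_0: "x 0 + y 2 \<ge> 0" using cell_3_1 nn[of 3 1] by simp
  have pair_2_1: "x 1 + y 2 \<ge> 0" using cell_4_4 nn[of 4 4] by simp
  have pair_2_2: "x 2 + y 2 \<ge> 0" using cell_0_2 nn[of 0 2] by simp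
  have pair_2_3: "x 3 + y 2 \<ge> 0" using cell_1_0 nn[of 1 0] by simp
  have pair_2_4: "x 4 + y 2 \<ge> 0" using cell_2_3 nn[of 2 3] by simp
  have pair_3_0: "x 0 + y 3 \<ge> 0" using cell_2_4 nn[of 2 4] by simp
  have pair_3_1: "x 1 + y 3 \<ge> 0" using cell_3_2 nn[of 3 2] by simp
  have pair_3_2: "x 2 + y 3 \<ge> 0" using cell_4_0 nn[of 4 0] by simp
  have pair_3_3: "x 3 + y 3 \<ge> 0" using cell_0_3 nn[of 0 3] by simp
  have pair_3_4: "x 4 + y 3 \<ge> 0" using cell_1_1 nn[of 1 1] by simp
  have pair_4_0: "x 0 + y 4 \<ge> 0" using cell_1_2 nn[of 1 2] by simp
  have pair_4_1: "x 1 + y 4 \<ge> 0" using cell_2_0 nn[of 2 0] by simp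
  have pair_4_2: "x 2 + y 4 \<ge> 0" using cell_3_3 nn[of 3 3] by simp
  have pair_4_3: "x 3 + y 4 \<ge> 0" using cell_4_1 nn[of 4 1] by simp
  have pair_4_4: "x 4 + y 4 \<ge> 0" using cell_0_4 nn[of 0 4] by simp
  have pairs: "\<forall>k<5. \<forall>k'<5. x k' + y k \<ge> 0"
    unfolding all5 using pair_0_0 pair_0_1 pair_0_2 pair_0_3 pair_0_4 pair_1_0 pair_1_1 pair_1_2 pair_1_3 pair_1_4 pair_2_0 pair_2_1 pair_2_2 pair_2_3 pair_2_4 pair_3_0 pair_3_1 pair_3_2 pair_3_3 pair_3_4 pair_4_0 pair_4_1 pair_4_2 pair_4_3 pair_4_4 by blast
  define t where "t = - Min (x ` {..<5})"
  define c where "c l = (if l < 5 then x l + t else y (l - 5) - t)" for l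
  have fin: "finite (x ` {..<5})" "x ` {..<5} \<noteq> {}" by (auto simp: five)
  have cnn: "\<forall>l<10. c l \<ge> 0"
  proof (intro allI impI)
    fix l :: nat assume l: "l < 10"
    show "c l \<ge> 0"
    proof (cases "l < 5")
      case True
      then have "Min (x ` {..<5}) \<le> x l" using fin by (intro Min_le) auto
      then show ?thesis using True unfolding c_def t_def by simp
    next
      case False
      obtain k' where k': "k' < 5" "Min (x ` {..<5}) = x k'" using Min_in[OF fin] by auto
      have "x k' + y (l - 5) \<ge> 0" using pairs k'(1) False l by auto
      then show ?thesis using False k' unfolding c_def t_def by simp
    qed
  qed
  have csum0: "(\<Sum>l<10. c l) = x 0 + x 1 + x 2 + x 3 + x 4 + y 0 + y 1 + y 2 + y 3 + y 4"
    unfolding ten c_def by (simp add: algebra_simps)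
  have csum: "(\<Sum>l<10. c l) = 1"
    using csum0 x0 x1 x2 x3 x4 y0 y1 y2 y3 y4 E(1-5) by linarith
  have comb_0_0: "A 0 0 = (\<Sum>l<10. c l * PM l 0 0)" unfolding ten using cell_0_0 by (simp add: PM_def perm_matrix_def sig_def c_def)
  have comb_0_1: "A 0 1 = (\<Sum>l<10. c l * PM l 0 1)" unfolding ten using cell_0_1 by (simp add: PM_def perm_matrix_def sig_def c_def)
  have comb_0_2: "A 0 2 = (\<Sum>l<10. c l * PM l 0 2)" unfolding ten using cell_0_2 by (simp add: PM_def perm_matrix_def sig_def c_def)
  have comb_0_3: "A 0 3 = (\<Sum>l<10. c l * PM l 0 3)" unfolding ten using cell_0_3 by (simp add: PM_def perm_matrix_def sig_def c_def)
  have comb_0_4: "A 0 4 = (\<Sum>l<10. c l * PM l 0 4)" unfolding ten using cell_0_4 by (simp add: PM_def perm_matrix_def sig_def c_def)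
  have comb_1_0: "A 1 0 = (\<Sum>l<10. c l * PM l 1 0)" unfolding ten using cell_1_0 by (simp add: PM_def perm_matrix_def sig_def c_def)
  have comb_1_1: "A 1 1 = (\<Sum>l<10. c l * PM l 1 1)" unfolding ten using cell_1_1 by (simp add: PM_def perm_matrix_def sig_def c_def)
  have comb_1_2: "A 1 2 = (\<Sum>l<10. c l * PM l 1 2)" unfolding ten using cell_1_2 by (simp add: PM_def perm_matrix_def sig_def c_def)
  have comb_1_3: "A 1 3 = (\<Sum>l<10. c l * PM l 1 3)" unfolding ten using cell_1_3 by (simp add: PM_def perm_matrix_def sig_def c_def)
  have comb_1_4: "A 1 4 = (\<Sum>l<10. c l * PM l 1 4)" unfolding ten using cell_1_4 by (simp add: PM_def perm_matrix_def sig_def c_def)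
  have comb_2_0: "A 2 0 = (\<Sum>l<10. c l * PM l 2 0)" unfolding ten using cell_2_0 by (simp add: PM_def perm_matrix_def sig_def c_def)
  have comb_2_1: "A 2 1 = (\<Sum>l<10. c l * PM l 2 1)" unfolding ten using cell_2_1 by (simp add: PM_def perm_matrix_def sig_def c_def)
  have comb_2_2: "A 2 2 = (\<Sum>l<10. c l * PM l 2 2)" unfolding ten using cell_2_2 by (simp add: PM_def perm_matrix_def sig_def c_def)
  have comb_2_3: "A 2 3 = (\<Sum>l<10. c l * PM l 2 3)" unfolding ten using cell_2_3 by (simp add: PM_def perm_matrix_def sig_def c_def)
  have comb_2_4: "A 2 4 = (\<Sum>l<10. c l * PM l 2 4)" unfolding ten using cell_2_4 by (simp add: PM_def perm_matrix_def sig_def c_def)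
  have comb_3_0: "A 3 0 = (\<Sum>l<10. c l * PM l 3 0)" unfolding ten using cell_3_0 by (simp add: PM_def perm_matrix_def sig_def c_def)
  have comb_3_1: "A 3 1 = (\<Sum>l<10. c l * PM l 3 1)" unfolding ten using cell_3_1 by (simp add: PM_def perm_matrix_def sig_def c_def)
  have comb_3_2: "A 3 2 = (\<Sum>l<10. c l * PM l 3 2)" unfolding ten using cell_3_2 by (simp add: PM_def perm_matrix_def sig_def c_def)
  have comb_3_3: "A 3 3 = (\<Sum>l<10. c l * PM l 3 3)" unfolding ten using cell_3_3 by (simp add: PM_def perm_matrix_def sig_def c_def)
  have comb_3_4: "A 3 4 = (\<Sum>l<10. c l * PM l 3 4)" unfolding ten using cell_3_4 by (simp add: PM_def perm_matrix_def sig_def c_def)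
  have comb_4_0: "A 4 0 = (\<Sum>l<10. c l * PM l 4 0)" unfolding ten using cell_4_0 by (simp add: PM_def perm_matrix_def sig_def c_def)
  have comb_4_1: "A 4 1 = (\<Sum>l<10. c l * PM l 4 1)" unfolding ten using cell_4_1 by (simp add: PM_def perm_matrix_def sig_def c_def)
  have comb_4_2: "A 4 2 = (\<Sum>l<10. c l * PM l 4 2)" unfolding ten using cell_4_2 by (simp add: PM_def perm_matrix_def sig_def c_def)
  have comb_4_3: "A 4 3 = (\<Sum>l<10. c l * PM l 4 3)" unfolding ten using cell_4_3 by (simp add: PM_def perm_matrix_def sig_def c_def)
  have comb_4_4: "A 4 4 = (\<Sum>l<10. c l * PM l 4 4)" unfolding ten using cell_4_4 by (simp add: PM_def perm_matrix_def sig_def c_def)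
  have comb: "\<forall>i<5. \<forall>j<5. A i j = (\<Sum>l<10. c l * PM l i j)"
    unfolding all5 using comb_0_0 comb_0_1 comb_0_2 comb_0_3 comb_0_4 comb_1_0 comb_1_1 comb_1_2 comb_1_3 comb_1_4 comb_2_0 comb_2_1 comb_2_2 comb_2_3 comb_2_4 comb_3_0 comb_3_1 comb_3_2 comb_3_3 comb_3_4 comb_4_0 comb_4_1 comb_4_2 comb_4_3 comb_4_4 by blast
  show ?thesis unfolding convex_comb_of_def
    using cnn csum comb PM_perm PM_pan by blast
qed

theorem theorem1p1:
  fixes A :: "nat \<Rightarrow> nat \<Rightarrow> real"
  shows "panstochastic 5 A \<longleftrightarrow>
         convex_comb_of 5 (\<lambda>P. is_perm_matrix 5 P \<and> panstochastic 5 P) A"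
  using easy_dir hard_dir by blast

end
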